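(* Let $\Omega_n=\dfrac{\pi^{n/2}}{\Gamma\left(\frac n2+1\right)}$ for $n\in\mathbb{N}_0$. As $n\to\infty$, the following asymptotic series holds: \[ \ln\frac{\Omega_n^2}{\Omega_{n-1}\Omega_{n+1}}=\sum_{j=1}^\infty\frac{\lambda_j}{n^j},\qquad \lambda_j=(-1)^j\left\{2B_{j+1}(1)-B_{j+1}\left(\tfrac12\right)-B_{j+1}\left(\tfrac32\right)\right\}\frac{2^j}{j(j+1)}\quad(j\in\mathbb{N}), \] where $B_m(x)$ denote the Bernoulli polynomials.
   Context: $\Omega_n$ is the volume of the unit ball in $\mathbb{R}^n$; $\Gamma$ is Euler's gamma function. The Bernoulli polynomials are defined by $\frac{te^{xt}}{e^t-1}=\sum_{m\ge0}B_m(x)\frac{t^m}{m!}$. The series equality is an asymptotic expansion: for every $N$, the left side minus $\sum_{j=1}^N\lambda_jn^{-j}$ is $O(n^{-N-1})$ as $n\to\infty$. *)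

theory Defs
  imports "HOL-Analysis.Analysis" "HOL-Library.Landau_Symbols"
    "HOL-Computational_Algebra.Formal_Power_Series"
begin

definition bernoulli_poly :: "nat \<Rightarrow> real \<Rightarrow> real" where
  "bernoulli_poly m x =
     fact m * fps_nth (fps_X * fps_exp x / (fps_exp 1 - 1)) m"

definition lambda_coeff :: "nat \<Rightarrow> real" where
  "lambda_coeff j = (-1) ^ j *
     (2 * bernoulli_poly (j + 1) 1 - bernoulli_poly (j + 1) (1/2)
        - bernoulli_poly (j + 1) (3/2)) * 2 ^ j / (real j * (real j + 1))"

end

theory Submission
  imports Defs "HOL-Probability.Distributions" "HOL-Real_Asymp.Real_Asymp"
begin

definition Bf :: "real \<Rightarrow> real fps" where "Bf c = fps_X * fps_exp c / (fps_exp 1 - 1)"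
definition bfun :: "real \<Rightarrow> real \<Rightarrow> real" where
  "bfun c x = (if x = 0 then 1 else x * exp (c*x) / (exp x - 1))"

lemma subdeg_E1: "subdegree (fps_exp (1::real) - 1) = 1"
  by (rule subdegreeI) auto

lemma subdeg_XE: "subdegree (fps_X * fps_exp (c::real)) = 1"
  by (rule subdegreeI) (auto simp: fps_X_mult_nth)

lemma bfun_exp: "bfun c has_fps_expansion Bf c"
proof -
  have "(\<lambda>x::real. if x = 0 then 1 else (x * exp(c*x)) / (exp x - 1)) has_fps_expansion (fps_X * fps_exp c / (fps_exp 1 - 1))"
  proof (rule has_fps_expansion_divide)
    show "(\<lambda>x. x * exp (c * x)) has_fps_expansion fps_X * fps_exp c"
      by (intro fps_expansion_intros)
    show "(\<lambda>x::real. exp x - 1) has_fps_expansion fps_exp 1 - 1"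
      using has_fps_expansion_diff[OF has_fps_expansion_exp[of "1::real"] has_fps_expansion_1] by simp
  next
    show "subdegree (fps_exp (1::real) - 1) \<le> subdegree (fps_X * fps_exp c)"
      unfolding subdeg_E1 subdeg_XE by simp
  next
    show "fps_exp (1::real) - 1 \<noteq> 0"
      using subdeg_E1 by (metis subdegree_0 zero_neq_one)
  next
    show "(1::real) = fps_nth (fps_X * fps_exp c) (subdegree (fps_exp (1::real) - 1)) / fps_nth (fps_exp 1 - 1) (subdegree (fps_exp (1::real) - 1))"
      using subdeg_E1 by simp
  qed
  thus ?thesis unfolding bfun_def Bf_def by simp
qed

lemma has_fps_expansion_neg_arg:
  fixes F :: "real fps"
  assumes "f has_fps_expansion F"
  shows "(\<lambda>x. f (-x)) has_fps_expansion Abs_fps (\<lambda>n. (-1)^n * fps_nth F n)"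
proof -
  have rad: "fps_conv_radius (Abs_fps (\<lambda>n. (-1)^n * fps_nth F n)) = fps_conv_radius F"
    unfolding fps_conv_radius_def by (rule conv_radius_cong) (simp add: abs_mult power_abs)
  have ev: "eventually (\<lambda>z. eval_fps F z = f z) (nhds 0)"
    using assms by (auto simp: has_fps_expansion_def)
  then obtain e where e: "e > 0" "\<And>z. dist z 0 < e \<Longrightarrow> eval_fps F z = f z"
    unfolding eventually_nhds_metric by auto
  have "eventually (\<lambda>z. eval_fps (Abs_fps (\<lambda>n. (-1)^n * fps_nth F n)) z = f (-z)) (nhds 0)"
    unfolding eventually_nhds_metric
  proof (intro exI[of _ e] conjI allI impI)
    fix z :: real assume "dist z 0 < e"
    hence "eval_fps F (-z) = f (-z)" using e by auto
    moreover have "eval_fps (Abs_fps (\<lambda>n. (-1)^n * fps_nth F n)) z = eval_fps F (-z)"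
    proof -
      have "(\<lambda>n. fps_nth (Abs_fps (\<lambda>n. (-1)^n * fps_nth F n)) n * z^n) = (\<lambda>n. fps_nth F n * (-z)^n)"
        by (rule ext) (simp add: power_minus[of z])
      thus ?thesis unfolding eval_fps_def by simp
    qed
    ultimately show "eval_fps (Abs_fps (\<lambda>n. (-1)^n * fps_nth F n)) z = f (-z)" by simp
  qed (use e in auto)
  thus ?thesis using assms rad by (auto simp: has_fps_expansion_def)
qed


definition Kf :: "real fps" where "Kf = Bf (1/2) + Bf (3/2) - fps_const 2 * Bf 1"
definition kfun :: "real \<Rightarrow> real" where "kfun x = bfun (1/2) x + bfun (3/2) x - 2 * bfun 1 x"

lemma kfun_exp: "kfun has_fps_expansion Kf"
proof -
  have "(\<lambda>x. bfun (1/2) x + bfun (3/2) x - 2 * bfun 1 x) has_fps_expansion Kf"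
    unfolding Kf_def by (intro has_fps_expansion_diff has_fps_expansion_add has_fps_expansion_cmult_left bfun_exp)
  thus ?thesis unfolding kfun_def[abs_def] .
qed

definition Vf :: "real fps" where "Vf = inverse (unit_factor (fps_exp 1 - 1))"

lemma Bf_eq: "Bf c = fps_exp c * Vf"
proof -
  have "Bf c = fps_shift 1 (fps_X * fps_exp c * Vf)"
    unfolding Bf_def fps_divide_def Vf_def subdeg_E1 by simp
  also have "\<dots> = fps_exp c * Vf"
    by (simp add: fps_eq_iff mult.assoc)
  finally show ?thesis .
qed

lemma Kf_eq: "Kf = (fps_exp (1/2) + fps_exp (3/2) - fps_const 2 * fps_exp 1) * Vf"
  unfolding Kf_def Bf_eq by (simp add: algebra_simps)

lemma Kf_0: "fps_nth Kf 0 = 0"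
  unfolding Kf_eq by (simp add: fps_mult_nth)

lemma Kf_1: "fps_nth Kf 1 = 0"
  unfolding Kf_eq by (simp add: fps_mult_nth)

definition Ks :: "real fps" where "Ks = Abs_fps (\<lambda>n. (-1)^n * fps_nth Kf n)"

lemma kneg_exp: "(\<lambda>x. kfun (-x)) has_fps_expansion Ks"
  unfolding Ks_def by (rule has_fps_expansion_neg_arg[OF kfun_exp])

lemma has_fps_expansion_shift':
  fixes F :: "real fps"
  assumes "f has_fps_expansion F" "\<And>i. i < n \<Longrightarrow> fps_nth F i = 0"
  shows "(\<lambda>x. if x = 0 then fps_nth F n else f x / x ^ n) has_fps_expansion fps_shift n F"
proof (cases "F = 0")
  case False
  hence "n \<le> subdegree F" using assms(2) by (intro subdegree_geI) auto
  thus ?thesis by (intro has_fps_expansion_shift assms) auto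
next
  case True
  have "eventually (\<lambda>z. eval_fps F z = f z) (nhds 0)"
    using assms by (auto simp: has_fps_expansion_def)
  hence "eventually (\<lambda>z. eval_fps (fps_shift n F) z = (if z = 0 then fps_nth F n else f z / z ^ n)) (nhds 0)"
    by eventually_elim (use True in \<open>auto simp: eval_fps_def\<close>)
  moreover have "fps_conv_radius (fps_shift n F) > 0"
    using True by (simp add: fps_conv_radius_def)
  ultimately show ?thesis by (auto simp: has_fps_expansion_def)
qed

definition Gs :: "real fps" where "Gs = fps_shift 2 Ks"

definition gfun :: "real \<Rightarrow> real" where
  "gfun x = (if x = 0 then fps_nth Ks 2 else
     (exp (-(x/2)) + exp (-(3*x/2)) - 2 * exp (-x)) / (x * (1 - exp (-x))))"

lemma frac3: "A \<noteq> 0 \<Longrightarrow> (y::real) * p / A + y * q / A - 2 * (y * r / A) = y * (p + q - 2 * r) / A"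
  by (simp add: field_simps)

lemma gfun_alt: "x \<noteq> 0 \<Longrightarrow> kfun (-x) / x^2 = gfun x"
proof -
  assume x: "x \<noteq> 0"
  have e: "exp (-x) \<noteq> 1" using x by simp
  hence e': "exp (-x) - 1 \<noteq> 0" "1 - exp (-x) \<noteq> 0" by auto
  have h1: "exp ((1/2) * (-x)) = exp (-(x/2))" "exp ((3/2) * (-x)) = exp (-(3*x/2))" "exp (1 * (-x)) = exp (-x)"
    by simp_all
  have "kfun (-x) = (-x) * exp ((1/2) * (-x)) / (exp (-x) - 1) + (-x) * exp ((3/2) * (-x)) / (exp (-x) - 1)
        - 2 * ((-x) * exp (1 * (-x)) / (exp (-x) - 1))"
    using x unfolding kfun_def bfun_def by simp
  also have "\<dots> = (-x) * (exp (-(x/2)) + exp (-(3*x/2)) - 2 * exp (-x)) / (exp (-x) - 1)"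
    unfolding h1 by (rule frac3[OF e'(1)])
  finally have k: "kfun (-x) = (-x) * (exp (-(x/2)) + exp (-(3*x/2)) - 2 * exp (-x)) / (exp (-x) - 1)" .
  have "kfun (-x) / x^2 = (exp (-(x/2)) + exp (-(3*x/2)) - 2 * exp (-x)) / (x * (1 - exp (-x)))"
    unfolding k using x e' by (simp add: field_simps power2_eq_square)
  thus ?thesis using x unfolding gfun_def by simp
qed

lemma gfun_exp: "gfun has_fps_expansion Gs"
proof -
  have "(\<lambda>x. if x = 0 then fps_nth Ks 2 else kfun (-x) / x ^ 2) has_fps_expansion Gs"
    unfolding Gs_def
  proof (rule has_fps_expansion_shift'[OF kneg_exp])
    fix i :: nat assume "i < 2"
    hence "i = 0 \<or> i = 1" by auto
    thus "fps_nth Ks i = 0" using Kf_0 Kf_1 by (auto simp: Ks_def)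
  qed
  also have "(\<lambda>x. if x = 0 then fps_nth Ks 2 else kfun (-x) / x ^ 2) = gfun"
    by (rule ext) (auto simp: gfun_alt gfun_def)
  finally show ?thesis .
qed

lemma Gs_nth: "fps_nth Gs k = (-1)^k * fps_nth Kf (k+2)"
  by (simp add: Gs_def Ks_def)

lemma gfun_bounds:
  assumes x: "x > 0"
  shows "0 \<le> gfun x" "gfun x \<le> 1/2"
proof -
  define u where "u = exp (-(x/2))"
  have u: "0 < u" "u < 1" using x by (auto simp: u_def)
  have e2: "exp (-x) = u^2" unfolding u_def by (simp add: exp_of_nat_mult[symmetric] power2_eq_square exp_add[symmetric])
  have e3: "exp (-(3*x/2)) = u^3" unfolding u_def
    by (simp add: power3_eq_cube exp_add[symmetric])
  have g: "gfun x = u * (1 - u) / (x * (1 + u))"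
  proof -
    have "gfun x = (u + u^3 - 2 * u^2) / (x * (1 - u^2))"
      using x unfolding gfun_def e2 e3 u_def by simp
    also have "u + u^3 - 2 * u^2 = (u * (1 - u)) * (1 - u)"
      by (simp add: algebra_simps power2_eq_square power3_eq_cube)
    also have "x * (1 - u^2) = (x * (1 + u)) * (1 - u)"
      by (simp add: algebra_simps power2_eq_square)
    also have "(u * (1 - u)) * (1 - u) / ((x * (1 + u)) * (1 - u)) = u * (1 - u) / (x * (1 + u))"
      using u by (intro mult_divide_mult_cancel_right) auto
    finally show ?thesis .
  qed
  show "0 \<le> gfun x" unfolding g using u x by simp
  have "1 - u \<le> x/2" using exp_ge_add_one_self[of "-(x/2)"] unfolding u_def by simp
  have a: "u * (1 - u) \<le> x/2"
  proof -
    have "u * (1 - u) \<le> 1 * (1 - u)" using u by (intro mult_right_mono) auto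
    thus ?thesis using \<open>1 - u \<le> x/2\<close> by simp
  qed
  have "u * (1 - u) / (x * (1 + u)) \<le> u * (1 - u) / x"
    using u x by (intro divide_left_mono) (auto intro: mult_pos_pos)
  also have "\<dots> \<le> (x/2) / x" using a x by (intro divide_right_mono) auto
  also have "\<dots> = 1/2" using x by simp
  finally show "gfun x \<le> 1/2" unfolding g .
qed

lemma eval_fps_split:
  fixes F :: "real fps"
  assumes "norm t < fps_conv_radius F"
  shows "eval_fps F t = (\<Sum>k<N. fps_nth F k * t^k) + t^N * eval_fps (fps_shift N F) t"
proof -
  have s: "(\<lambda>i. fps_nth (fps_shift N F) i * t^i) sums eval_fps (fps_shift N F) t"
    using assms by (intro sums_eval_fps) simp
  have "(\<lambda>i. t^N * (fps_nth (fps_shift N F) i * t^i)) sums (t^N * eval_fps (fps_shift N F) t)"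
    by (rule sums_mult[OF s])
  moreover have "(\<lambda>i. t^N * (fps_nth (fps_shift N F) i * t^i)) = (\<lambda>i. fps_nth F (i + N) * t^(i+N))"
    by (rule ext) (simp add: power_add mult_ac)
  ultimately have "(\<lambda>i. fps_nth F (i + N) * t^(i+N)) sums (t^N * eval_fps (fps_shift N F) t)" by simp
  hence "(\<lambda>i. fps_nth F i * t^i) sums (t^N * eval_fps (fps_shift N F) t + (\<Sum>k<N. fps_nth F k * t^k))"
    by (subst (asm) sums_iff_shift[where f="\<lambda>i. fps_nth F i * t^i"])
  moreover have "(\<lambda>i. fps_nth F i * t^i) sums eval_fps F t" using assms by (rule sums_eval_fps)
  ultimately show ?thesis using sums_unique2 by (simp add: add.commute)
qed

lemma remainder_bound:
  "\<exists>C. \<forall>t\<ge>0. \<bar>gfun t - (\<Sum>k<N. fps_nth Gs k * t^k)\<bar> \<le> C * t^N"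
proof -
  have rad: "fps_conv_radius Gs > 0" and ev: "eventually (\<lambda>z. eval_fps Gs z = gfun z) (nhds 0)"
    using gfun_exp by (auto simp: has_fps_expansion_def)
  obtain e where e: "e > 0" "\<And>z. dist z 0 < e \<Longrightarrow> eval_fps Gs z = gfun z"
    using ev unfolding eventually_nhds_metric by auto
  obtain d where d: "d > 0" "ereal d < fps_conv_radius Gs" "d < e"
  proof (cases "fps_conv_radius Gs")
    case (real r)
    show ?thesis by (rule that[of "min (r/2) (e/2)"]) (use rad real e in \<open>auto simp: min_def\<close>)
  next
    case PInf
    show ?thesis by (rule that[of "e/2"]) (use PInf e in auto)
  next
    case MInf
    thus ?thesis using rad by simp
  qed
  have cont: "continuous_on {0..d} (eval_fps (fps_shift N Gs))"
    by (rule continuous_on_subset[OF continuous_on_eval_fps]) (use d in \<open>auto simp: eball_def intro: le_less_trans[of _ "ereal d"]\<close>)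
  obtain M where M: "\<And>t. t \<in> {0..d} \<Longrightarrow> \<bar>eval_fps (fps_shift N Gs) t\<bar> \<le> M"
    using compact_imp_bounded[OF compact_continuous_image[OF cont compact_Icc]]
    unfolding bounded_iff by fastforce
  define C2 where "C2 = 1/2 / d^N + (\<Sum>k<N. \<bar>fps_nth Gs k\<bar> / d^(N-k))"
  show ?thesis
  proof (intro exI[of _ "max M C2"] allI impI)
    fix t :: real assume t: "t \<ge> 0"
    show "\<bar>gfun t - (\<Sum>k<N. fps_nth Gs k * t^k)\<bar> \<le> max M C2 * t^N"
    proof (cases "t \<le> d")
      case True
      have "gfun t = eval_fps Gs t" using e(2)[of t] True d t by auto
      also have "\<dots> = (\<Sum>k<N. fps_nth Gs k * t^k) + t^N * eval_fps (fps_shift N Gs) t"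
        by (rule eval_fps_split) (use True t d in \<open>auto intro: le_less_trans[of _ "ereal d"]\<close>)
      finally have "\<bar>gfun t - (\<Sum>k<N. fps_nth Gs k * t^k)\<bar> = t^N * \<bar>eval_fps (fps_shift N Gs) t\<bar>"
        using t by (simp add: abs_mult)
      also have "\<dots> \<le> t^N * M" using M[of t] True t by (intro mult_left_mono) auto
      also have "\<dots> \<le> max M C2 * t^N" using t by (simp add: mult.commute mult_right_mono)
      finally show ?thesis .
    next
      case False
      hence td: "t > d" by simp
      have tk: "t^k \<le> t^N / d^(N-k)" if "k < N" for k
      proof -
        have "t^N = t^k * t^(N-k)" using that by (simp add: power_add[symmetric])
        moreover have "d^(N-k) \<le> t^(N-k)" using td d by (intro power_mono) auto
        ultimately have "t^k * d^(N-k) \<le> t^N" using t d by (simp add: mult_left_mono)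
        thus ?thesis using d by (simp add: field_simps)
      qed
      have g: "\<bar>gfun t\<bar> \<le> 1/2" using gfun_bounds[of t] td d by auto
      have "\<bar>gfun t - (\<Sum>k<N. fps_nth Gs k * t^k)\<bar> \<le> \<bar>gfun t\<bar> + (\<Sum>k<N. \<bar>fps_nth Gs k\<bar> * t^k)"
      proof -
        have "\<bar>(\<Sum>k<N. fps_nth Gs k * t^k)\<bar> \<le> (\<Sum>k<N. \<bar>fps_nth Gs k * t^k\<bar>)" by (rule sum_abs)
        also have "\<dots> = (\<Sum>k<N. \<bar>fps_nth Gs k\<bar> * t^k)" using t by (simp add: abs_mult)
        finally show ?thesis using abs_triangle_ineq4[of "gfun t" "(\<Sum>k<N. fps_nth Gs k * t^k)"] by linarith
      qed
      also have "\<dots> \<le> 1/2 / d^N * t^N + (\<Sum>k<N. \<bar>fps_nth Gs k\<bar> / d^(N-k) * t^N)"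
      proof (rule add_mono)
        have "1 \<le> t^N / d^N" using td d by (simp add: field_simps power_mono)
        thus "\<bar>gfun t\<bar> \<le> 1/2 / d^N * t^N" using g by (simp add: field_simps)
        show "(\<Sum>k<N. \<bar>fps_nth Gs k\<bar> * t^k) \<le> (\<Sum>k<N. \<bar>fps_nth Gs k\<bar> / d^(N-k) * t^N)"
        proof (rule sum_mono)
          fix k assume k: "k \<in> {..<N}"
          have "\<bar>fps_nth Gs k\<bar> * t^k \<le> \<bar>fps_nth Gs k\<bar> * (t^N / d^(N-k))"
            using tk k by (intro mult_left_mono) auto
          thus "\<bar>fps_nth Gs k\<bar> * t^k \<le> \<bar>fps_nth Gs k\<bar> / d^(N-k) * t^N" by simp
        qed
      qed
      also have "\<dots> = C2 * t^N" unfolding C2_def by (simp add: distrib_right sum_distrib_right)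
      also have "\<dots> \<le> max M C2 * t^N" using t by (intro mult_right_mono) auto
      finally show ?thesis .
    qed
  qed
qed

lemma lap_pow:
  fixes l :: real
  assumes l: "l > 0"
  shows "has_bochner_integral lborel (\<lambda>t. indicator {0..} t * (t^k * exp (-(l*t)))) (fact k / l ^ Suc k)"
proof -
  have nn: "(\<integral>\<^sup>+ x. ennreal (erlang_density k l x) \<partial>lborel) = ennreal 1"
    using nn_integral_erlang_ith_moment[OF l, of k 0] by simp
  have hb: "has_bochner_integral lborel (erlang_density k l) 1"
    by (rule has_bochner_integral_nn_integral[OF _ _ _ nn]) (use l in auto)
  have "has_bochner_integral lborel (\<lambda>t. fact k / l ^ Suc k * erlang_density k l t) (fact k / l ^ Suc k * 1)"
    by (rule has_bochner_integral_mult_right[OF hb])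
  moreover have "(\<lambda>t. fact k / l ^ Suc k * erlang_density k l t) = (\<lambda>t. indicator {0..} t * (t^k * exp (-(l*t))))"
    using l by (intro ext) (auto simp: erlang_density_def indicator_def field_simps)
  ultimately show ?thesis by simp
qed

lemma frullani:
  fixes a b :: real
  assumes ab: "0 < a" "a \<le> b"
  shows "has_bochner_integral lborel (\<lambda>t. indicator {0..} t * ((exp (-(a*t)) - exp (-(b*t))) / t)) (ln b - ln a)"
proof -
  define f where "f = (\<lambda>t. indicator {0..} t * ((exp (-(a*t)) - exp (-(b*t))) / t))"
  define h where "h = (\<lambda>(s::real) (t::real). ennreal (exp (-(s*t)) * indicator {0..} t * indicator {a..b} s))"
  have fnn: "f t \<ge> 0" for t
  proof (cases "t > 0")
    case True
    hence "exp (-(b*t)) \<le> exp (-(a*t))" using ab by (simp add: mult_right_mono)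
    thus ?thesis using True by (auto simp: f_def indicator_def)
  qed (auto simp: f_def indicator_def)
  have [measurable]: "f \<in> borel_measurable lborel" unfolding f_def by measurable
  have step1: "(\<integral>\<^sup>+t. ennreal (f t) \<partial>lborel) = (\<integral>\<^sup>+t. (\<integral>\<^sup>+s. h s t \<partial>lborel) \<partial>lborel)"
  proof (rule nn_integral_cong_AE)
    show "AE t in lborel. ennreal (f t) = (\<integral>\<^sup>+s. h s t \<partial>lborel)"
      using AE_lborel_singleton[of 0]
    proof eventually_elim
      case (elim t)
      show ?case
      proof (cases "t > 0")
        case False
        with elim have "t < 0" by simp
        thus ?thesis by (simp add: f_def h_def indicator_def)
      next
        case True
        have "(\<integral>\<^sup>+s. h s t \<partial>lborel) = (\<integral>\<^sup>+s. ennreal (exp (-(s*t))) * indicator {a..b} s \<partial>lborel)"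
          using True by (intro nn_integral_cong) (auto simp: h_def indicator_def)
        also have "\<dots> = ennreal ((exp (-(a*t)) - exp (-(b*t))) / t)"
        proof -
          have "(\<integral>\<^sup>+s. ennreal (exp (-(s*t))) * indicator {a..b} s \<partial>lborel) = ennreal ((\<lambda>s. -exp(-(s*t))/t) b - (\<lambda>s. -exp(-(s*t))/t) a)"
          proof (rule nn_integral_FTC_Icc)
            fix s assume "s \<in> {a..b}"
            show "((\<lambda>s. -exp (-(s*t))/t) has_real_derivative exp (-(s*t))) (at s)"
              using True by (auto intro!: derivative_eq_intros simp: field_simps)
          qed (use ab in auto)
          thus ?thesis by (simp add: diff_divide_distrib)
        qed
        finally show ?thesis using True by (simp add: f_def)
      qed
    qed
  qed
  have step2: "(\<integral>\<^sup>+t. (\<integral>\<^sup>+s. h s t \<partial>lborel) \<partial>lborel) = (\<integral>\<^sup>+s. (\<integral>\<^sup>+t. h s t \<partial>lborel) \<partial>lborel)"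
    by (rule lborel_pair.Fubini') (unfold h_def, measurable)
  have step3: "(\<integral>\<^sup>+s. (\<integral>\<^sup>+t. h s t \<partial>lborel) \<partial>lborel) = (\<integral>\<^sup>+s. ennreal (1/s) * indicator {a..b} s \<partial>lborel)"
  proof (rule nn_integral_cong)
    fix s :: real
    show "(\<integral>\<^sup>+t. h s t \<partial>lborel) = ennreal (1/s) * indicator {a..b} s"
    proof (cases "s \<in> {a..b}")
      case False
      thus ?thesis by (simp add: h_def)
    next
      case True
      hence s: "s > 0" using ab by auto
      have "(\<integral>\<^sup>+t. h s t \<partial>lborel) = (\<integral>\<^sup>+t. ennreal (exp (-(s*t))) * indicator {0..} t \<partial>lborel)"
        using True by (intro nn_integral_cong) (auto simp: h_def indicator_def)
      also have "\<dots> = ennreal (0 - (\<lambda>t. -exp(-(s*t))/s) 0)"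
      proof (rule nn_integral_FTC_atLeast)
        fix t :: real
        show "((\<lambda>t. -exp (-(s*t))/s) has_real_derivative exp (-(s*t))) (at t)"
          using s by (auto intro!: derivative_eq_intros simp: field_simps)
        show "((\<lambda>t. -exp (-(s*t))/s) \<longlongrightarrow> 0) at_top"
          using s by real_asymp
      qed auto
      also have "\<dots> = ennreal (1/s) * indicator {a..b} s" using True by simp
      finally show ?thesis .
    qed
  qed
  have step4: "(\<integral>\<^sup>+s. ennreal (1/s) * indicator {a..b} s \<partial>lborel) = ennreal (ln b - ln a)"
  proof (rule nn_integral_FTC_Icc)
    fix s assume "s \<in> {a..b}"
    thus "(ln has_real_derivative 1/s) (at s)" using ab by (auto intro!: derivative_eq_intros)
  qed (use ab in auto)
  have nn: "(\<integral>\<^sup>+t. ennreal (f t) \<partial>lborel) = ennreal (ln b - ln a)"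
    using step1 step2 step3 step4 by simp
  have "has_bochner_integral lborel f (ln b - ln a)"
    by (rule has_bochner_integral_nn_integral[OF _ _ _ nn]) (use ab fnn in auto)
  thus ?thesis unfolding f_def .
qed

definition Fint :: "real \<Rightarrow> real" where
  "Fint x = integral\<^sup>L lborel (\<lambda>t. indicator {0..} t * (exp (-(x*t)) * gfun t))"

lemma gfun_meas [measurable]: "gfun \<in> borel_measurable borel"
  unfolding gfun_def by measurable

lemma lap_int: "(l::real) > 0 \<Longrightarrow> integrable lborel (\<lambda>t. indicator {0..} t * (t^k * exp (-(l*t))))"
  using lap_pow[of l k] by (auto simp: integrable.simps)

lemma Fint_integrable:
  assumes x: "x > 0"
  shows "integrable lborel (\<lambda>t. indicator {0..} t * (exp (-(x*t)) * gfun t))"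
proof (rule Bochner_Integration.integrable_bound[where f="\<lambda>t. 1/2 * (indicator {0..} t * (t^0 * exp (-(x*t))))"])
  show "integrable lborel (\<lambda>t. 1/2 * (indicator {0..} t * (t^0 * exp (-(x*t)))))"
    using lap_int[OF x, of 0] by simp
  show "AE t in lborel. norm (indicator {0..} t * (exp (-(x*t)) * gfun t)) \<le> norm (1/2 * (indicator {0..} t * (t^0 * exp (-(x*t)))))"
    using AE_lborel_singleton[of 0]
  proof eventually_elim
    case (elim t)
    show ?case
    proof (cases "t > 0")
      case True
      from gfun_bounds[OF True] have "\<bar>exp (-(x*t)) * gfun t\<bar> \<le> exp (-(x*t)) * (1/2)"
        by (simp add: abs_mult)
      thus ?thesis using True by (simp add: indicator_def)
    next
      case False
      thus ?thesis using elim by (simp add: indicator_def)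
    qed
  qed
qed measurable

lemma pointwise_diff:
  assumes t: "t > 0"
  shows "exp (-(x*t)) * gfun t - exp (-((x+1)*t)) * gfun t =
     (exp (-((x+1/2)*t)) - exp (-((x+1)*t))) / t - (exp (-((x+1)*t)) - exp (-((x+3/2)*t))) / t"
proof -
  define u where "u = exp (-(t/2))"
  define E where "E = exp (-(x*t))"
  have u: "0 < u" "u < 1" using t by (auto simp: u_def)
  have e2: "exp (-t) = u^2" unfolding u_def by (simp add: power2_eq_square exp_add[symmetric])
  have e3: "exp (-(3*t/2)) = u^3" unfolding u_def
    by (simp add: power3_eq_cube exp_add[symmetric])
  have x1: "exp (-((x+1)*t)) = E * u^2" unfolding E_def e2[symmetric] by (simp add: exp_add[symmetric] algebra_simps)
  have x2: "exp (-((x+1/2)*t)) = E * u" unfolding E_def u_def by (simp add: exp_add[symmetric] algebra_simps)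
  have x3: "exp (-((x+3/2)*t)) = E * u^3" unfolding E_def e3[symmetric] by (simp add: exp_add[symmetric] algebra_simps)
  have g: "gfun t = (u + u^3 - 2 * u^2) / (t * (1 - u^2))"
    using t by (simp add: gfun_def e2 e3 u_def[symmetric])
  have "u^2 < 1^2" using u by (intro power_strict_mono) auto
  hence "1 - u^2 \<noteq> 0" by simp
  note nz = this
  have "exp (-(x*t)) * gfun t - exp (-((x+1)*t)) * gfun t = E * (1 - u^2) * gfun t"
    unfolding x1 E_def[symmetric] by (simp add: algebra_simps)
  also have "\<dots> = E * (u + u^3 - 2 * u^2) / t"
    unfolding g using nz t by (simp add: field_simps)
  also have "\<dots> = (E * u - E * u^2) / t - (E * u^2 - E * u^3) / t"
    by (simp add: diff_divide_distrib[symmetric] algebra_simps power2_eq_square power3_eq_cube)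
  finally show ?thesis unfolding x1 x2 x3 .
qed

lemma Fint_diff:
  assumes x: "x > 0"
  shows "Fint x - Fint (x+1) = 2 * ln (x+1) - ln (x+1/2) - ln (x+3/2)"
proof -
  have i1: "integrable lborel (\<lambda>t. indicator {0..} t * (exp (-(x*t)) * gfun t))" using Fint_integrable[OF x] .
  have i2: "integrable lborel (\<lambda>t. indicator {0..} t * (exp (-((x+1)*t)) * gfun t))" using Fint_integrable[of "x+1"] x by simp
  have "Fint x - Fint (x+1) = integral\<^sup>L lborel (\<lambda>t. indicator {0..} t * (exp (-(x*t)) * gfun t) - indicator {0..} t * (exp (-((x+1)*t)) * gfun t))"
    unfolding Fint_def using i1 i2 by simp
  also have "(\<lambda>t. indicator {0..} t * (exp (-(x*t)) * gfun t) - indicator {0..} t * (exp (-((x+1)*t)) * gfun t)) =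
     (\<lambda>t. indicator {0..} t * ((exp (-((x+1/2)*t)) - exp (-((x+1)*t))) / t) - indicator {0..} t * ((exp (-((x+1)*t)) - exp (-((x+3/2)*t))) / t))"
  proof (rule ext)
    fix t :: real
    show "indicator {0..} t * (exp (-(x*t)) * gfun t) - indicator {0..} t * (exp (-((x+1)*t)) * gfun t) =
      indicator {0..} t * ((exp (-((x+1/2)*t)) - exp (-((x+1)*t))) / t) - indicator {0..} t * ((exp (-((x+1)*t)) - exp (-((x+3/2)*t))) / t)"
    proof (cases "t > 0")
      case True
      have "indicator {0..} t * (exp (-(x*t)) * gfun t) - indicator {0..} t * (exp (-((x+1)*t)) * gfun t) =
            exp (-(x*t)) * gfun t - exp (-((x+1)*t)) * gfun t" using True by simp
      also have "\<dots> = (exp (-((x+1/2)*t)) - exp (-((x+1)*t))) / t - (exp (-((x+1)*t)) - exp (-((x+3/2)*t))) / t"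
        by (rule pointwise_diff[OF True])
      finally show ?thesis using True by simp
    next
      case False
      thus ?thesis by (cases "t = 0") (auto simp: indicator_def)
    qed
  qed
  also have "integral\<^sup>L lborel \<dots> = (ln (x+1) - ln (x+1/2)) - (ln (x+3/2) - ln (x+1))"
  proof (rule has_bochner_integral_integral_eq, rule has_bochner_integral_diff)
    show "has_bochner_integral lborel (\<lambda>t. indicator {0..} t * ((exp (-((x+1/2)*t)) - exp (-((x+1)*t))) / t)) (ln (x+1) - ln (x+1/2))"
      by (rule frullani) (use x in auto)
    show "has_bochner_integral lborel (\<lambda>t. indicator {0..} t * ((exp (-((x+1)*t)) - exp (-((x+3/2)*t))) / t)) (ln (x+3/2) - ln (x+1))"
      using frullani[of "x+1" "x+3/2"] x by (simp add: algebra_simps)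
  qed
  finally show ?thesis by simp
qed

lemma watson:
  "\<exists>C. \<forall>x>0. \<bar>Fint x - (\<Sum>k<N. fps_nth Gs k * fact k / x^(k+1))\<bar> \<le> C / x^(N+1)"
proof -
  obtain C0 where C0: "\<And>t. t \<ge> 0 \<Longrightarrow> \<bar>gfun t - (\<Sum>k<N. fps_nth Gs k * t^k)\<bar> \<le> C0 * t^N"
    using remainder_bound[of N] by auto
  have "\<bar>gfun 1 - (\<Sum>k<N. fps_nth Gs k * 1^k)\<bar> \<le> C0" using C0[of 1] by simp
  hence C0pos: "0 \<le> C0" by (meson abs_ge_zero order.trans)
  show ?thesis
  proof (intro exI[of _ "C0 * fact N"] allI impI)
    fix x :: real assume x: "x > 0"
    define P where "P = (\<lambda>t. \<Sum>k<N. fps_nth Gs k * t^k)"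
    have hP: "has_bochner_integral lborel (\<lambda>t. \<Sum>k<N. fps_nth Gs k * (indicator {0..} t * (t^k * exp (-(x*t)))))
                (\<Sum>k<N. fps_nth Gs k * (fact k / x^Suc k))"
      by (intro has_bochner_integral_sum has_bochner_integral_mult_right lap_pow x)
    have eqP: "(\<lambda>t. \<Sum>k<N. fps_nth Gs k * (indicator {0..} t * (t^k * exp (-(x*t))))) = (\<lambda>t. indicator {0..} t * (exp (-(x*t)) * P t))"
      by (rule ext) (simp add: P_def sum_distrib_left mult_ac)
    have iP: "integrable lborel (\<lambda>t. indicator {0..} t * (exp (-(x*t)) * P t))"
      using hP unfolding eqP by (auto simp: integrable.simps)
    have IP: "integral\<^sup>L lborel (\<lambda>t. indicator {0..} t * (exp (-(x*t)) * P t)) = (\<Sum>k<N. fps_nth Gs k * fact k / x^(k+1))"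
      using has_bochner_integral_integral_eq[OF hP] unfolding eqP by simp
    define hh where "hh = (\<lambda>t. indicator {0..} t * (exp (-(x*t)) * gfun t) - indicator {0..} t * (exp (-(x*t)) * P t))"
    define bb where "bb = (\<lambda>t. C0 * (indicator {0..} t * (t^N * exp (-(x*t)))))"
    have eq1: "Fint x - (\<Sum>k<N. fps_nth Gs k * fact k / x^(k+1)) = integral\<^sup>L lborel hh"
      unfolding Fint_def IP[symmetric] hh_def using Fint_integrable[OF x] iP by simp
    have b1: "norm (integral\<^sup>L lborel hh) \<le> integral\<^sup>L lborel (\<lambda>t. norm (hh t))"
      by (rule integral_norm_bound)
    have b2: "integral\<^sup>L lborel (\<lambda>t. norm (hh t)) \<le> integral\<^sup>L lborel bb"
    proof (rule integral_mono')
      show "integrable lborel bb"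
        using lap_int[OF x, of N] unfolding bb_def by simp
      fix t :: real
      show "norm (hh t) \<le> bb t"
      proof (cases "t \<ge> 0")
        case True
        have "hh t = exp (-(x*t)) * (gfun t - P t)"
          using True unfolding hh_def by (simp add: algebra_simps)
        hence "norm (hh t) = exp (-(x*t)) * \<bar>gfun t - P t\<bar>" by (simp add: abs_mult)
        also have "\<dots> \<le> exp (-(x*t)) * (C0 * t^N)" using C0[OF True] unfolding P_def by (intro mult_left_mono) auto
        also have "\<dots> = bb t" using True unfolding bb_def by simp
        finally show ?thesis .
      next
        case False thus ?thesis unfolding hh_def bb_def by simp
      qed
      show "0 \<le> bb t" unfolding bb_def using C0pos by (cases "t \<ge> 0") auto
    qed
    have b3: "integral\<^sup>L lborel bb = C0 * (fact N / x^Suc N)"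
      unfolding bb_def by (rule has_bochner_integral_integral_eq[OF has_bochner_integral_mult_right[OF lap_pow[OF x, of N]]])
    have "\<bar>Fint x - (\<Sum>k<N. fps_nth Gs k * fact k / x^(k+1))\<bar> \<le> C0 * (fact N / x^Suc N)"
    proof -
      have "norm (integral\<^sup>L lborel hh) \<le> integral\<^sup>L lborel bb" using b1 b2 by (rule order.trans)
      thus ?thesis unfolding eq1 b3 by simp
    qed
    thus "\<bar>Fint x - (\<Sum>k<N. fps_nth Gs k * fact k / x^(k+1))\<bar> \<le> C0 * fact N / x^(N+1)" by simp
  qed
qed

definition Dg :: "real \<Rightarrow> real" where
  "Dg x = ln (Gamma (x + 1/2)) + ln (Gamma (x + 3/2)) - 2 * ln (Gamma (x + 1))"

lemma lnGamma_plus1: "(y::real) > 0 \<Longrightarrow> ln (Gamma (y + 1)) = ln y + ln (Gamma y)"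
proof -
  assume y: "y > 0"
  hence "y \<notin> \<int>\<^sub>\<le>\<^sub>0" using nonpos_Ints_nonpos by force
  hence "Gamma (y + 1) = y * Gamma y" by (rule Gamma_plus1)
  moreover have "ln (y * Gamma y) = ln y + ln (Gamma y)"
    by (rule ln_mult_pos) (use y Gamma_real_pos[OF y] in auto)
  ultimately show ?thesis by simp
qed

lemma Dg_diff:
  assumes x: "x > 0"
  shows "Dg x - Dg (x+1) = 2 * ln (x+1) - ln (x+1/2) - ln (x+3/2)"
proof -
  have a: "ln (Gamma (x + 3/2)) = ln (x + 1/2) + ln (Gamma (x + 1/2))"
    using lnGamma_plus1[of "x + 1/2"] x by (simp add: add.assoc)
  have b: "ln (Gamma (x + 1 + 3/2)) = ln (x + 3/2) + ln (Gamma (x + 3/2))"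
    using lnGamma_plus1[of "x + 3/2"] x by (simp add: add_ac)
  have c: "ln (Gamma (x + 1 + 1)) = ln (x + 1) + ln (Gamma (x + 1))"
    using lnGamma_plus1[of "x + 1"] x by simp
  have d: "ln (Gamma (x + 1 + 1/2)) = ln (Gamma (x + 3/2))" by (simp add: add.assoc)
  show ?thesis unfolding Dg_def b c d a by simp
qed

lemma lg_mid:
  fixes a b :: real
  assumes "a > 0" "b > 0"
  shows "ln (Gamma ((a + b)/2)) \<le> (ln (Gamma a) + ln (Gamma b)) / 2"
proof -
  have "(ln \<circ> Gamma) ((1 - 1/2) *\<^sub>R a + (1/2::real) *\<^sub>R b) \<le> (1 - 1/2) * (ln \<circ> Gamma) a + (1/2::real) * (ln \<circ> Gamma) b"
    by (rule convex_onD[OF log_convex_Gamma_real]) (use assms in auto)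
  moreover have eq: "(1 - 1/2) *\<^sub>R a + (1/2::real) *\<^sub>R b = (a + b)/2" by simp
  moreover have r: "\<And>A B::real. (1 - 1/2) * A + 1/2 * B = (A + B)/2" by simp
  ultimately show ?thesis unfolding eq o_def r by simp
qed

lemma Dg_bounds:
  assumes x: "x > 0"
  shows "0 \<le> Dg x" "Dg x \<le> 1 / (2*x)"
proof -
  have e: "(x + 1/2 + (x + 3/2))/2 = x + 1" by simp
  have "ln (Gamma (x + 1)) \<le> (ln (Gamma (x + 1/2)) + ln (Gamma (x + 3/2))) / 2"
    using lg_mid[of "x + 1/2" "x + 3/2"] x unfolding e by simp
  thus "0 \<le> Dg x" unfolding Dg_def by simp
  have e1: "(x + (x + 1))/2 = x + 1/2" by simp
  have m1: "ln (Gamma (x + 1/2)) \<le> (ln (Gamma x) + ln (Gamma (x + 1))) / 2"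
    using lg_mid[of x "x+1"] x unfolding e1 by simp
  have m2: "ln (Gamma (x + 3/2)) \<le> (ln (Gamma (x+1)) + ln (Gamma (x + 2))) / 2"
  proof -
    have e2: "(x + 1 + (x + 2))/2 = x + 3/2" by simp
    show ?thesis using lg_mid[of "x+1" "x+2"] x unfolding e2 by simp
  qed
  have g1: "ln (Gamma (x + 1)) = ln x + ln (Gamma x)" using lnGamma_plus1[OF x] .
  have g2: "ln (Gamma (x + 2)) = ln (x + 1) + ln (Gamma (x + 1))"
    using lnGamma_plus1[of "x+1"] x by (simp add: add.assoc)
  have "Dg x \<le> (ln (x+1) - ln x) / 2" unfolding Dg_def using m1 m2 g1 g2 by simp
  also have "ln (x+1) - ln x = ln (1 + 1/x)"
  proof -
    have "ln (1 + 1/x) = ln ((x+1)/x)" using x by (simp add: field_simps)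
    also have "\<dots> = ln (x+1) - ln x" using x by (simp add: ln_div)
    finally show ?thesis by simp
  qed
  also have "\<dots> \<le> 1/x" using ln_add_one_self_le_self[of "1/x"] x by simp
  finally show "Dg x \<le> 1 / (2*x)" by simp
qed

lemma Fint_bound: "\<exists>C. \<forall>x>0. \<bar>Fint x\<bar> \<le> C / x"
  using watson[of 0] by simp

lemma Dg_eq_Fint:
  assumes x: "x > 0"
  shows "Dg x = Fint x"
proof -
  define h where "h y = Dg y - Fint y" for y
  have per: "h (x + real m) = h x" for m
  proof (induction m)
    case (Suc m)
    have "x + real m > 0" using x by simp
    hence "h (x + real m + 1) = h (x + real m)"
      using Dg_diff Fint_diff unfolding h_def by force
    moreover have "h (x + real (Suc m)) = h (x + real m + 1)" by (rule arg_cong[where f=h]) simp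
    ultimately show ?case using Suc by simp
  qed simp
  obtain C where C: "\<And>y. y > 0 \<Longrightarrow> \<bar>Fint y\<bar> \<le> C / y" using Fint_bound by auto
  have hb: "\<bar>h y\<bar> \<le> (1/2 + \<bar>C\<bar>) / y" if y: "y > 0" for y
  proof -
    have "\<bar>h y\<bar> \<le> \<bar>Dg y\<bar> + \<bar>Fint y\<bar>" unfolding h_def by simp
    also have "\<bar>Dg y\<bar> \<le> 1/(2*y)" using Dg_bounds[OF y] by simp
    also have "\<bar>Fint y\<bar> \<le> \<bar>C\<bar> / y"
    proof -
      have "C / y \<le> \<bar>C\<bar> / y" using y by (intro divide_right_mono) auto
      thus ?thesis using C[OF y] by linarith
    qed
    finally show ?thesis by (simp add: add_divide_distrib)
  qed
  show ?thesis
  proof (rule ccontr)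
    assume "Dg x \<noteq> Fint x"
    hence pos: "\<bar>h x\<bar> > 0" unfolding h_def by simp
    obtain m :: nat where m: "(1/2 + \<bar>C\<bar>) / \<bar>h x\<bar> < real m" using reals_Archimedean2 by blast
    have "\<bar>h x\<bar> \<le> (1/2 + \<bar>C\<bar>) / (x + real m)" using hb[of "x + real m"] per[of m] x by simp
    also have "\<dots> < \<bar>h x\<bar>"
    proof -
      have "(1/2 + \<bar>C\<bar>) < real m * \<bar>h x\<bar>" using m pos by (simp add: field_simps)
      also have "\<dots> < (x + real m) * \<bar>h x\<bar>" using x pos by (intro mult_strict_right_mono) auto
      finally show ?thesis using x by (simp add: field_simps)
    qed
    finally show False by simp
  qed
qed

lemma bp_Bf: "bernoulli_poly m c = fact m * fps_nth (Bf c) m"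
  unfolding bernoulli_poly_def Bf_def ..

lemma Kf_nth: "fps_nth Kf m = fps_nth (Bf (1/2)) m + fps_nth (Bf (3/2)) m - 2 * fps_nth (Bf 1) m"
  unfolding Kf_def by simp

lemma lambda_Gs: "lambda_coeff (Suc k) = fps_nth Gs k * fact k * 2 ^ Suc k"
proof -
  define A where "A = fps_nth Kf (k+2)"
  have "2 * bernoulli_poly (Suc k + 1) 1 - bernoulli_poly (Suc k + 1) (1/2) - bernoulli_poly (Suc k + 1) (3/2)
        = - (fact (k+2) * A)"
    unfolding bp_Bf A_def Kf_nth by (simp add: algebra_simps)
  hence "lambda_coeff (Suc k) = (-1) ^ Suc k * (- (fact (k+2) * A)) * 2 ^ Suc k / (real (Suc k) * (real (Suc k) + 1))"
    unfolding lambda_coeff_def by simp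
  also have "\<dots> = (-1)^k * A * fact k * 2 ^ Suc k"
  proof -
    have f: "fact (k+2) = (real k + 2) * (real k + 1) * (fact k :: real)"
      by (simp add: fact_Suc algebra_simps)
    have d: "real (Suc k) * (real (Suc k) + 1) = (real k + 2) * (real k + 1)" by (simp add: algebra_simps)
    have nz: "(real k + 2) * (real k + 1) \<noteq> 0" by simp
    have num: "(-1) ^ Suc k * (- (fact (k+2) * A)) * 2 ^ Suc k = ((-1)^k * A * fact k * 2 ^ Suc k) * ((real k + 2) * (real k + 1))"
      unfolding f by (simp add: algebra_simps)
    show ?thesis unfolding d num by (rule nonzero_mult_div_cancel_right[OF nz])
  qed
  finally show ?thesis unfolding Gs_nth A_def by simp
qed

lemma ratio_eq:
  assumes n: "n \<ge> 1"
  shows "ln (unit_ball_vol (real n) ^ 2 / (unit_ball_vol (real n - 1) * unit_ball_vol (real n + 1))) = Dg (real n / 2)"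
proof -
  define x where "x = real n / 2"
  have x: "x > 0" using n by (simp add: x_def)
  define P where "P = pi powr (real n / 2)"
  define Q1 where "Q1 = pi powr ((real n - 1) / 2)"
  define Q2 where "Q2 = pi powr ((real n + 1) / 2)"
  have QP: "Q1 * Q2 = P^2"
  proof -
    have "Q1 * Q2 = pi powr ((real n - 1) / 2 + (real n + 1) / 2)" unfolding Q1_def Q2_def by (simp add: powr_add)
    also have "(real n - 1) / 2 + (real n + 1) / 2 = real n / 2 + real n / 2" by (simp add: field_simps)
    also have "pi powr (real n / 2 + real n / 2) = P^2" unfolding P_def by (simp add: powr_add[symmetric] power2_eq_square)
    finally show ?thesis .
  qed
  have pos: "P > 0" "Q1 > 0" "Q2 > 0" unfolding P_def Q1_def Q2_def by auto
  have g: "Gamma (x + 1) > 0" "Gamma (x + 1/2) > 0" "Gamma (x + 3/2) > 0" using x by auto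
  have u0: "unit_ball_vol (real n) = P / Gamma (x + 1)" unfolding unit_ball_vol_def P_def x_def by simp
  have u1: "unit_ball_vol (real n - 1) = Q1 / Gamma (x + 1/2)"
    unfolding unit_ball_vol_def Q1_def x_def by (simp add: field_simps)
  have u2: "unit_ball_vol (real n + 1) = Q2 / Gamma (x + 3/2)"
    unfolding unit_ball_vol_def Q2_def x_def by (simp add: field_simps)
  have r: "unit_ball_vol (real n) ^ 2 / (unit_ball_vol (real n - 1) * unit_ball_vol (real n + 1))
        = Gamma (x + 1/2) * Gamma (x + 3/2) / Gamma (x + 1) ^ 2"
    unfolding u0 u1 u2 using pos g QP by (simp add: field_simps power2_eq_square)
  have "ln (Gamma (x + 1/2) * Gamma (x + 3/2) / Gamma (x + 1) ^ 2) = Dg x"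
    unfolding Dg_def using g by (simp add: ln_div ln_mult_pos ln_realpow)
  thus ?thesis unfolding r x_def .
qed

lemma sum_shift1: "(\<Sum>j=1..N. f j) = (\<Sum>k<N. f (Suc k))"
  by (induction N) simp_all

theorem theorem13:
  fixes N :: nat
  shows "(\<lambda>n::nat. ln (unit_ball_vol (real n) ^ 2 /
             (unit_ball_vol (real n - 1) * unit_ball_vol (real n + 1)))
           - (\<Sum>j=1..N. lambda_coeff j / real n ^ j))
         \<in> O(\<lambda>n. 1 / real n ^ (N + 1))"
proof -
  obtain C where C: "\<And>x. x > 0 \<Longrightarrow> \<bar>Fint x - (\<Sum>k<N. fps_nth Gs k * fact k / x^(k+1))\<bar> \<le> C / x^(N+1)"
    using watson[of N] by auto
  show ?thesis
  proof (rule bigoI[where c = "\<bar>C\<bar> * 2^(N+1)"])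
    show "eventually (\<lambda>n::nat. norm (ln (unit_ball_vol (real n) ^ 2 /
             (unit_ball_vol (real n - 1) * unit_ball_vol (real n + 1)))
           - (\<Sum>j=1..N. lambda_coeff j / real n ^ j)) \<le> \<bar>C\<bar> * 2^(N+1) * norm (1 / real n ^ (N + 1))) at_top"
      using eventually_ge_at_top[of "1::nat"]
    proof eventually_elim
      case (elim n)
      define x where "x = real n / 2"
      have x: "x > 0" using elim by (simp add: x_def)
      have nn: "real n > 0" using elim by simp
      have l: "ln (unit_ball_vol (real n) ^ 2 / (unit_ball_vol (real n - 1) * unit_ball_vol (real n + 1))) = Fint x"
        unfolding ratio_eq[OF elim] x_def[symmetric] using Dg_eq_Fint[OF x] .
      have s: "(\<Sum>j=1..N. lambda_coeff j / real n ^ j) = (\<Sum>k<N. fps_nth Gs k * fact k / x^(k+1))"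
        unfolding sum_shift1
      proof (rule sum.cong[OF refl])
        fix k assume "k \<in> {..<N}"
        show "lambda_coeff (Suc k) / real n ^ Suc k = fps_nth Gs k * fact k / x^(k+1)"
          unfolding lambda_Gs x_def using nn by (simp add: power_divide field_simps)
      qed
      have "\<bar>Fint x - (\<Sum>k<N. fps_nth Gs k * fact k / x^(k+1))\<bar> \<le> C / x^(N+1)" using C[OF x] .
      also have "C / x^(N+1) = C * 2^(N+1) / real n ^ (N+1)"
        unfolding x_def using nn by (simp add: power_divide field_simps)
      also have "\<dots> \<le> \<bar>C\<bar> * 2^(N+1) * \<bar>1 / real n ^ (N + 1)\<bar>"
        using nn by (simp add: divide_right_mono)
      finally show ?case unfolding l s by simp
    qed
  qed
qed

end
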